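(* There is an absolute constant $C>0$ such that for all $k\ge 2$, $\gamma\in(0,1]$, $\varepsilon\in(0,1]$ and $n\ge C\,k^{3/2}/(\gamma^2\varepsilon^2)$ the following test is a uniformity tester over $[k]$ with distance parameter $\gamma$: each of the $n$ users applies $\varepsilon$-RAPPOR to its sample $X_j$ and sends $b_j\in\{0,1\}^k$; the curator computes $N_x=\sum_{j}\mathbf 1\{b_{jx}=1\}$, $\lambda=\alpha_R/k+\beta_R$ and $T=\sum_{x\in[k]}\big((N_x-(n-1)\lambda)^2-N_x\big)+k(n-1)\lambda^2$, and outputs ``uniform'' if $T<n(n-1)\alpha_R^2\gamma^2/k$ and ``not uniform'' otherwise.
   Context: $\Delta([k])$ is the set of probability distributions on $[k]=\{1,\dots,k\}$, $u$ the uniform distribution on $[k]$, $d_{TV}(p,q)=\frac12\|p-q\|_1$. Users hold i.i.d. samples $X_1,\dots,X_n$ from an unknown $p\in\Delta([k])$. The $\varepsilon$-RAPPOR mechanism maps $x\in[k]$ to a random vector $b\in\{0,1\}^k$ obtained from the one-hot vector $e_x$ by flipping each coordinate independently with probability $\beta_R=1/(e^{\varepsilon/2}+1)$; $\alpha_R=(e^{\varepsilon/2}-1)/(e^{\varepsilon/2}+1)$. A uniformity tester with distance parameter $\gamma$ must, for every $p$, output ``uniform'' with probability at least $2/3$ if $p=u$ and ``not uniform'' with probability at least $2/3$ if $d_{TV}(p,u)>\gamma$. *)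

theory Defs
  imports "HOL-Probability.Probability"
begin

text \<open>Distributions on [k] = {1..k} are represented as nat pmfs supported in {1..k}.\<close>

definition uniform_k :: "nat \<Rightarrow> nat pmf" where
  "uniform_k k = pmf_of_set {1..k}"

definition dTV :: "nat \<Rightarrow> nat pmf \<Rightarrow> nat pmf \<Rightarrow> real" where
  "dTV k p q = (1/2) * (\<Sum>x\<in>{1..k}. \<bar>pmf p x - pmf q x\<bar>)"

definition beta_R :: "real \<Rightarrow> real" where
  "beta_R \<epsilon> = 1 / (exp (\<epsilon>/2) + 1)"

definition alpha_R :: "real \<Rightarrow> real" where
  "alpha_R \<epsilon> = (exp (\<epsilon>/2) - 1) / (exp (\<epsilon>/2) + 1)"

text \<open>epsilon-RAPPOR: one-hot vector e_x in {0,1}^k (as a function on {1..k}),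
  each coordinate flipped independently with probability beta_R.\<close>
definition rappor :: "real \<Rightarrow> nat \<Rightarrow> nat \<Rightarrow> (nat \<Rightarrow> bool) pmf" where
  "rappor \<epsilon> k x = Pi_pmf {1..k} False
     (\<lambda>y. map_pmf (\<lambda>flip. (y = x) \<noteq> flip) (bernoulli_pmf (beta_R \<epsilon>)))"

text \<open>A uniformity tester: n users each hold an i.i.d. sample from p, apply the
  local mechanism, and the curator applies the decision rule (True = "uniform")
  to the vector of all n messages (users indexed 0..n-1).\<close>
definition is_uniformity_tester ::
  "nat \<Rightarrow> real \<Rightarrow> nat \<Rightarrow> (nat \<Rightarrow> 'b pmf) \<Rightarrow> 'b \<Rightarrow> ((nat \<Rightarrow> 'b) \<Rightarrow> bool) \<Rightarrow> bool" where
  "is_uniformity_tester k \<gamma> n mech dflt dec \<longleftrightarrow>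
     (\<forall>p :: nat pmf. set_pmf p \<subseteq> {1..k} \<longrightarrow>
        (let M = Pi_pmf {..<n} dflt (\<lambda>_. bind_pmf p mech) in
          (p = uniform_k k \<longrightarrow> measure_pmf.prob M {B. dec B} \<ge> 2/3) \<and>
          (dTV k p (uniform_k k) > \<gamma> \<longrightarrow> measure_pmf.prob M {B. \<not> dec B} \<ge> 2/3)))"

definition count_N :: "nat \<Rightarrow> (nat \<Rightarrow> nat \<Rightarrow> bool) \<Rightarrow> nat \<Rightarrow> real" where
  "count_N n B x = real (card {j \<in> {..<n}. B j x})"

definition rappor_stat :: "real \<Rightarrow> nat \<Rightarrow> nat \<Rightarrow> (nat \<Rightarrow> nat \<Rightarrow> bool) \<Rightarrow> real" where
  "rappor_stat \<epsilon> k n B =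
     (let lam = alpha_R \<epsilon> / real k + beta_R \<epsilon> in
       (\<Sum>x\<in>{1..k}. (count_N n B x - (real n - 1) * lam)\<^sup>2 - count_N n B x)
       + real k * (real n - 1) * lam\<^sup>2)"

definition rappor_test :: "real \<Rightarrow> nat \<Rightarrow> nat \<Rightarrow> real \<Rightarrow> (nat \<Rightarrow> nat \<Rightarrow> bool) \<Rightarrow> bool" where
  "rappor_test \<epsilon> k n \<gamma> B \<longleftrightarrow>
     rappor_stat \<epsilon> k n B < real n * (real n - 1) * (alpha_R \<epsilon>)\<^sup>2 * \<gamma>\<^sup>2 / real k"

end

theory Submission
  imports Defs
begin


lemma finite_set_Pi_pmf:
  assumes "finite A" "\<And>i. i \<in> A \<Longrightarrow> finite (set_pmf (p i))"
  shows "finite (set_pmf (Pi_pmf A d p))"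
  using assms by (subst set_Pi_pmf) (auto intro!: finite_PiE_dflt)

lemma E_Pi_prod:
  fixes f :: "'a \<Rightarrow> 'b \<Rightarrow> real"
  assumes A: "finite A" and fin: "\<And>i. i \<in> A \<Longrightarrow> finite (set_pmf (p i))"
  shows "measure_pmf.expectation (Pi_pmf A d p) (\<lambda>B. \<Prod>i\<in>A. f i (B i))
         = (\<Prod>i\<in>A. measure_pmf.expectation (p i) (f i))"
proof -
  have ind: "prob_space.indep_vars (measure_pmf (Pi_pmf A d p)) (\<lambda>_. borel) (\<lambda>i B. f i (B i)) A"
    by (rule prob_space.indep_vars_compose2[OF measure_pmf.prob_space_axioms indep_vars_Pi_pmf[OF A]]) auto
  have int: "integrable (measure_pmf (Pi_pmf A d p)) g" for g :: "_ \<Rightarrow> real"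
    by (rule integrable_measure_pmf_finite, rule finite_set_Pi_pmf[OF A fin])
  have "measure_pmf.expectation (Pi_pmf A d p) (\<lambda>B. \<Prod>i\<in>A. f i (B i))
        = (\<Prod>i\<in>A. measure_pmf.expectation (Pi_pmf A d p) (\<lambda>B. f i (B i)))"
    by (rule prob_space.indep_vars_lebesgue_integral[OF measure_pmf.prob_space_axioms A ind int])
  also have "\<dots> = (\<Prod>i\<in>A. measure_pmf.expectation (p i) (f i))"
  proof (intro prod.cong refl)
    fix i assume i: "i \<in> A"
    have "measure_pmf.expectation (Pi_pmf A d p) (\<lambda>B. f i (B i)) =
          measure_pmf.expectation (map_pmf (\<lambda>B. B i) (Pi_pmf A d p)) (f i)" by simp
    also have "map_pmf (\<lambda>B. B i) (Pi_pmf A d p) = p i" using i A by (simp add: Pi_pmf_component)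
    finally show "measure_pmf.expectation (Pi_pmf A d p) (\<lambda>B. f i (B i)) = measure_pmf.expectation (p i) (f i)" .
  qed
  finally show ?thesis .
qed

lemma E_Pi_prod_subset:
  fixes f :: "'a \<Rightarrow> 'b \<Rightarrow> real"
  assumes A: "finite A" and fin: "\<And>i. i \<in> A \<Longrightarrow> finite (set_pmf (p i))" and S: "S \<subseteq> A"
  shows "measure_pmf.expectation (Pi_pmf A d p) (\<lambda>B. \<Prod>i\<in>S. f i (B i))
         = (\<Prod>i\<in>S. measure_pmf.expectation (p i) (f i))"
proof -
  define g where "g i = (if i \<in> S then f i else (\<lambda>_. 1))" for i
  have 1: "(\<Prod>i\<in>S. h i) = (\<Prod>i\<in>A. if i \<in> S then h i else 1)" for h :: "_ \<Rightarrow> real"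
    using S A by (simp add: prod.If_cases Int_absorb1)
  have 2: "(\<Prod>i\<in>A. g i (B i)) = (\<Prod>i\<in>S. f i (B i))" for B
    by (subst 1) (intro prod.cong refl, simp add: g_def)
  have 3: "(\<Prod>i\<in>A. measure_pmf.expectation (p i) (g i)) = (\<Prod>i\<in>S. measure_pmf.expectation (p i) (f i))"
    by (subst 1) (intro prod.cong refl, simp add: g_def)
  have "measure_pmf.expectation (Pi_pmf A d p) (\<lambda>B. \<Prod>i\<in>S. f i (B i))
       = measure_pmf.expectation (Pi_pmf A d p) (\<lambda>B. \<Prod>i\<in>A. g i (B i))"
    by (simp only: 2)
  also have "\<dots> = (\<Prod>i\<in>A. measure_pmf.expectation (p i) (g i))" by (rule E_Pi_prod[OF A fin])
  also have "\<dots> = (\<Prod>i\<in>S. measure_pmf.expectation (p i) (f i))"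
    by (rule 3)
  finally show ?thesis .
qed

lemma E_pair_prod:
  fixes f :: "'a \<Rightarrow> real" and g :: "'b \<Rightarrow> real"
  assumes "finite (set_pmf P)" "finite (set_pmf R)"
  shows "measure_pmf.expectation (pair_pmf P R) (\<lambda>z. f (fst z) * g (snd z)) =
         measure_pmf.expectation P f * measure_pmf.expectation R g"
proof -
  have "measure_pmf.expectation (pair_pmf P R) (\<lambda>z. f (fst z) * g (snd z)) =
        (\<Sum>z\<in>set_pmf P \<times> set_pmf R. f (fst z) * g (snd z) * pmf (pair_pmf P R) z)"
    using assms by (intro integral_measure_pmf_real) (auto simp: set_pair_pmf)
  also have "\<dots> = (\<Sum>(y,h)\<in>set_pmf P \<times> set_pmf R. (f y * pmf P y) * (g h * pmf R h))"
    by (intro sum.cong refl) (auto simp: pmf_pair)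
  also have "\<dots> = (\<Sum>y\<in>set_pmf P. \<Sum>h\<in>set_pmf R. (f y * pmf P y) * (g h * pmf R h))"
    by (simp add: sum.cartesian_product)
  also have "\<dots> = (\<Sum>y\<in>set_pmf P. f y * pmf P y) * (\<Sum>h\<in>set_pmf R. g h * pmf R h)"
    by (simp add: sum_product)
  also have "\<dots> = measure_pmf.expectation P f * measure_pmf.expectation R g"
    using assms by (simp add: integral_measure_pmf_real[of "set_pmf P"] integral_measure_pmf_real[of "set_pmf R"])
  finally show ?thesis .
qed

lemma E_Pi_zero:
  fixes f :: "'b \<Rightarrow> real" and G :: "('a \<Rightarrow> 'b) \<Rightarrow> real"
  assumes A: "finite A" and fin: "\<And>i. i \<in> A \<Longrightarrow> finite (set_pmf (p i))" and l: "l \<in> A"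
    and f0: "measure_pmf.expectation (p l) f = 0"
    and G: "\<And>B y. G (B(l := y)) = G B"
  shows "measure_pmf.expectation (Pi_pmf A d p) (\<lambda>B. f (B l) * G B) = 0"
proof -
  have Aeq: "A = insert l (A - {l})" using l by auto
  have "Pi_pmf A d p = map_pmf (\<lambda>(y,h). h(l:=y)) (pair_pmf (p l) (Pi_pmf (A - {l}) d p))"
    by (subst Aeq, rule Pi_pmf_insert) (use A in auto)
  hence "measure_pmf.expectation (Pi_pmf A d p) (\<lambda>B. f (B l) * G B) =
     measure_pmf.expectation (pair_pmf (p l) (Pi_pmf (A - {l}) d p)) (\<lambda>z. f (fst z) * G (snd z))"
    by (simp add: case_prod_beta G)
  also have "\<dots> = 0"
    by (subst E_pair_prod) (use fin l A finite_set_Pi_pmf[of "A - {l}" p d] f0 in auto)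
  finally show ?thesis .
qed

lemma E_bind_pmf:
  fixes f :: "'b \<Rightarrow> real"
  assumes "\<And>x. \<bar>f x\<bar> \<le> K"
  shows "measure_pmf.expectation (bind_pmf P N) f = measure_pmf.expectation P (\<lambda>x. measure_pmf.expectation (N x) f)"
  unfolding measure_pmf_bind
  by (rule integral_bind[where K="count_space UNIV" and B=K and B'=1])
     (use assms in \<open>auto simp: measure_pmf.emeasure_space_1 measure_pmf_in_subprob_space intro: prob_space.finite_measure measure_pmf.prob_space_axioms\<close>)


definition ind :: "bool \<Rightarrow> real" where "ind b = (if b then 1 else 0)"

lemma ind_sq[simp]: "ind b * ind b = ind b" by (simp add: ind_def)
lemma ind_ge0[simp]: "0 \<le> ind b" by (simp add: ind_def)
lemma ind_le1[simp]: "ind b \<le> 1" by (simp add: ind_def)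

lemma alpha_beta: "1 - beta_R e = beta_R e + alpha_R e"
proof -
  have "exp (e/2) + 1 > 0" by (simp add: add_pos_pos)
  thus ?thesis unfolding alpha_R_def beta_R_def by (simp add: field_simps)
qed

lemma beta_pos: "0 < beta_R e" unfolding beta_R_def by (simp add: add_pos_pos)
lemma beta_lt1: "beta_R e < 1" unfolding beta_R_def by (simp add: add_pos_pos)
lemma alpha_pos: "0 < e \<Longrightarrow> 0 < alpha_R e"
  unfolding alpha_R_def by (intro divide_pos_pos) (simp_all add: add_pos_pos)
lemma alpha_le1: "alpha_R e \<le> 1"
  unfolding alpha_R_def by (simp add: add_pos_pos)

locale rap =
  fixes k :: nat and e :: real and p :: "nat pmf"
  assumes e_pos: "0 < e" and supp: "set_pmf p \<subseteq> {1..k}"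
begin

abbreviation "a \<equiv> alpha_R e"
abbreviation "bt \<equiv> beta_R e"

definition Q :: "(nat \<Rightarrow> bool) pmf" where "Q = bind_pmf p (rappor e k)"

lemma a_pos: "0 < a" using alpha_pos e_pos .
lemma bt_a: "1 - bt = bt + a" by (rule alpha_beta)

lemma fin_rappor: "finite (set_pmf (rappor e k z))"
  unfolding rappor_def by (rule finite_set_Pi_pmf) auto

lemma fin_p: "finite (set_pmf p)" using supp finite_subset by blast

lemma fin_Q[simp]: "finite (set_pmf Q)"
  unfolding Q_def using fin_p fin_rappor by simp

lemma int_Q[simp]: "integrable (measure_pmf Q) (f :: _ \<Rightarrow> real)"
  by (rule integrable_measure_pmf_finite) simp

lemma E_rappor_prod:
  assumes "S \<subseteq> {1..k}"
  shows "measure_pmf.expectation (rappor e k z) (\<lambda>b. \<Prod>l\<in>S. ind (b l)) =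
         (\<Prod>l\<in>S. bt + a * (if l = z then 1 else 0))"
proof -
  have "measure_pmf.expectation (rappor e k z) (\<lambda>b. \<Prod>l\<in>S. ind (b l)) =
     (\<Prod>l\<in>S. measure_pmf.expectation (map_pmf (\<lambda>flip. (l = z) \<noteq> flip) (bernoulli_pmf bt)) ind)"
    unfolding rappor_def by (rule E_Pi_prod_subset[OF _ _ assms]) auto
  also have "\<dots> = (\<Prod>l\<in>S. bt + a * (if l = z then 1 else 0))"
  proof (intro prod.cong refl)
    fix l
    have "measure_pmf.expectation (map_pmf (\<lambda>flip. (l = z) \<noteq> flip) (bernoulli_pmf bt)) ind
       = measure_pmf.expectation (bernoulli_pmf bt) (\<lambda>flip. ind ((l = z) \<noteq> flip))" by simp
    also have "\<dots> = ind ((l = z) \<noteq> True) * bt + ind ((l = z) \<noteq> False) * (1 - bt)"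
      by (rule integral_bernoulli_pmf) (use beta_pos[of e] beta_lt1[of e] in auto)
    also have "\<dots> = bt + a * (if l = z then 1 else 0)"
      using bt_a by (cases "l = z") (simp_all add: ind_def)
    finally show "measure_pmf.expectation (map_pmf (\<lambda>flip. (l = z) \<noteq> flip) (bernoulli_pmf bt)) ind
       = bt + a * (if l = z then 1 else 0)" .
  qed
  finally show ?thesis .
qed

lemma E_p_ind: "measure_pmf.expectation p (\<lambda>z. if x = z then 1 else 0 :: real) = pmf p x"
proof -
  have "(\<lambda>z. if x = z then 1 else 0 :: real) = indicator {x}" by (auto simp: indicator_def)
  thus ?thesis by (simp add: measure_pmf_single)
qed

definition q :: "nat \<Rightarrow> real" where "q x = measure_pmf.expectation Q (\<lambda>b. ind (b x))"

lemma q_eq: assumes "x \<in> {1..k}" shows "q x = bt + a * pmf p x"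
proof -
  have "q x = measure_pmf.expectation p (\<lambda>z. measure_pmf.expectation (rappor e k z) (\<lambda>b. ind (b x)))"
    unfolding q_def Q_def by (rule E_bind_pmf[where K=1]) (simp add: ind_def)
  also have "\<dots> = measure_pmf.expectation p (\<lambda>z. bt + a * (if x = z then 1 else 0))"
    using E_rappor_prod[of "{x}"] assms by (intro Bochner_Integration.integral_cong refl) simp
  also have "\<dots> = bt + a * pmf p x"
    using fin_p by (simp add: integrable_measure_pmf_finite E_p_ind)
  finally show ?thesis .
qed

lemma E_Q_pair: assumes "x \<in> {1..k}" "y \<in> {1..k}" "x \<noteq> y"
  shows "measure_pmf.expectation Q (\<lambda>b. ind (b x) * ind (b y)) = bt * bt + a * bt * (pmf p x + pmf p y)"
proof -
  have "measure_pmf.expectation Q (\<lambda>b. ind (b x) * ind (b y)) =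
     measure_pmf.expectation p (\<lambda>z. measure_pmf.expectation (rappor e k z) (\<lambda>b. ind (b x) * ind (b y)))"
    unfolding Q_def by (rule E_bind_pmf[where K=1]) (simp add: ind_def)
  also have "\<dots> = measure_pmf.expectation p (\<lambda>z. bt * bt + a * bt * ((if x = z then 1 else 0) + (if y = z then 1 else 0)))"
  proof (intro Bochner_Integration.integral_cong refl)
    fix z
    have "measure_pmf.expectation (rappor e k z) (\<lambda>b. ind (b x) * ind (b y)) =
          measure_pmf.expectation (rappor e k z) (\<lambda>b. \<Prod>l\<in>{x,y}. ind (b l))"
      using assms by (simp only: prod.insert finite.emptyI finite.insertI insert_iff empty_iff prod.empty mult_1_right simp_thms)
    also have "\<dots> = (\<Prod>l\<in>{x,y}. bt + a * (if l = z then 1 else 0))"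
      using assms by (intro E_rappor_prod) auto
    also have "\<dots> = bt * bt + a * bt * ((if x = z then 1 else 0) + (if y = z then 1 else 0))"
      using assms by (cases "x = z"; cases "y = z") (simp_all add: algebra_simps)
    finally show "measure_pmf.expectation (rappor e k z) (\<lambda>b. ind (b x) * ind (b y)) = \<dots>" .
  qed
  also have "\<dots> = bt * bt + a * bt * (pmf p x + pmf p y)"
    using fin_p by (simp add: integrable_measure_pmf_finite E_p_ind)
  finally show ?thesis .
qed

end



lemma cov_expand:
  fixes f g :: "'b \<Rightarrow> real"
  assumes "finite (set_pmf P)"
  shows "measure_pmf.expectation P (\<lambda>b. (f b - measure_pmf.expectation P f) * (g b - measure_pmf.expectation P g))
       = measure_pmf.expectation P (\<lambda>b. f b * g b) - measure_pmf.expectation P f * measure_pmf.expectation P g"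
proof -
  define cf where "cf = measure_pmf.expectation P f"
  define cg where "cg = measure_pmf.expectation P g"
  have int: "integrable (measure_pmf P) h" for h :: "_ \<Rightarrow> real" by (rule integrable_measure_pmf_finite[OF assms])
  have "(\<lambda>b. (f b - cf) * (g b - cg)) = (\<lambda>b. (f b * g b - cg * f b) - (cf * g b - cf * cg))"
    by (auto simp: algebra_simps)
  hence "measure_pmf.expectation P (\<lambda>b. (f b - cf) * (g b - cg)) =
     measure_pmf.expectation P (\<lambda>b. f b * g b) - cg * cf - (cf * cg - cf * cg)"
    by (simp add: int cf_def cg_def)
  thus ?thesis by (simp add: cf_def cg_def)
qed

context rap begin

definition c :: "nat \<Rightarrow> nat \<Rightarrow> real" where
  "c x y = measure_pmf.expectation Q (\<lambda>b. (ind (b x) - q x) * (ind (b y) - q y))"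

lemma q_bounds: assumes "x \<in> {1..k}" shows "0 \<le> q x" "q x \<le> 1"
proof -
  have "pmf p x \<le> 1" by (rule pmf_le_1)
  moreover have "0 \<le> pmf p x" by simp
  ultimately have "a * pmf p x \<le> a" "0 \<le> a * pmf p x" using a_pos by (auto simp: mult_left_le)
  thus "0 \<le> q x" "q x \<le> 1" using q_eq[OF assms] bt_a beta_pos[of e] by linarith+
qed

lemma c_formula: assumes "x \<in> {1..k}" "y \<in> {1..k}"
  shows "c x y = (if x = y then q x * (1 - q x) + a\<^sup>2 * (pmf p x)\<^sup>2 else 0) - a\<^sup>2 * pmf p x * pmf p y"
proof -
  have "c x y = measure_pmf.expectation Q (\<lambda>b. ind (b x) * ind (b y)) - q x * q y"
    unfolding c_def q_def by (rule cov_expand) simp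
  also have "\<dots> = (if x = y then q x * (1 - q x) + a\<^sup>2 * (pmf p x)\<^sup>2 else 0) - a\<^sup>2 * pmf p x * pmf p y"
  proof (cases "x = y")
    case True
    thus ?thesis by (simp add: q_def[symmetric] power2_eq_square algebra_simps)
  next
    case False
    thus ?thesis using E_Q_pair[OF assms False] q_eq[OF assms(1)] q_eq[OF assms(2)]
      by (simp add: power2_eq_square algebra_simps)
  qed
  finally show ?thesis .
qed

lemma c_sq_bound: assumes "x \<in> {1..k}" "y \<in> {1..k}"
  shows "(c x y)\<^sup>2 \<le> (if x = y then 1 else 0) + pmf p y"
proof (cases "x = y")
  case True
  have "c x y = q x * (1 - q x)" using c_formula[OF assms] True by (simp add: power2_eq_square)
  moreover have "0 \<le> q x * (1 - q x)" "q x * (1 - q x) \<le> 1"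
    using q_bounds[OF assms(1)] by (auto simp: mult_le_one)
  ultimately have "(c x y)\<^sup>2 \<le> 1" by (simp add: power_le_one)
  moreover have "0 \<le> pmf p y" by simp
  ultimately have "(c x y)\<^sup>2 \<le> 1 + pmf p y" by linarith
  thus ?thesis using True by simp
next
  case False
  have c: "c x y = - (a\<^sup>2 * pmf p x * pmf p y)" using c_formula[OF assms] False by simp
  have a1: "a\<^sup>2 \<le> 1" using a_pos alpha_le1[of e] by (simp add: power_le_one)
  have "a\<^sup>2 * pmf p x \<le> 1" using a1 pmf_le_1[of p x] a_pos by (simp add: mult_le_one)
  hence "a\<^sup>2 * pmf p x * pmf p y \<le> pmf p y" by (simp add: mult_left_le_one_le)
  moreover have "0 \<le> a\<^sup>2 * pmf p x * pmf p y" by simp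
  ultimately have "(a\<^sup>2 * pmf p x * pmf p y)\<^sup>2 \<le> (pmf p y)\<^sup>2" by (simp add: power_mono)
  also have "\<dots> \<le> pmf p y" using pmf_le_1[of p y] by (simp add: power2_eq_square mult_left_le_one_le)
  finally show ?thesis using c False by simp
qed

lemma sum_pmf_le1: "(\<Sum>y\<in>{1..k}. pmf p y) \<le> 1"
  by (simp flip: measure_measure_pmf_finite)

lemma sum_c_sq: "(\<Sum>x\<in>{1..k}. \<Sum>y\<in>{1..k}. (c x y)\<^sup>2) \<le> 2 * real k"
proof -
  have "(\<Sum>x\<in>{1..k}. \<Sum>y\<in>{1..k}. (c x y)\<^sup>2) \<le> (\<Sum>x\<in>{1..k}. \<Sum>y\<in>{1..k}. (if x = y then 1 else 0) + pmf p y)"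
    by (intro sum_mono c_sq_bound) auto
  also have "\<dots> = (\<Sum>x\<in>{1..k}. 1 + (\<Sum>y\<in>{1..k}. pmf p y))"
    by (intro sum.cong refl) (simp add: sum.distrib)
  also have "\<dots> \<le> (\<Sum>x\<in>{1..k}. 2)" by (intro sum_mono) (use sum_pmf_le1 in auto)
  finally show ?thesis by simp
qed

definition mu :: "nat \<Rightarrow> real" where "mu x = q x - (a / real k + bt)"

lemma mu_eq: "x \<in> {1..k} \<Longrightarrow> mu x = a * (pmf p x - 1 / real k)"
  by (simp add: mu_def q_eq algebra_simps)

definition v :: "(nat \<Rightarrow> bool) \<Rightarrow> real" where
  "v b = (\<Sum>x\<in>{1..k}. mu x * (ind (b x) - q x))"

lemma E_W0: "measure_pmf.expectation Q (\<lambda>b. ind (b x) - q x) = 0"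
  by (simp add: q_def)

lemma E_v0: "measure_pmf.expectation Q v = 0"
  unfolding v_def by (simp add: E_W0)

lemma E_v2: "measure_pmf.expectation Q (\<lambda>b. v b * v b) \<le> 5/4 * (\<Sum>x\<in>{1..k}. (mu x)\<^sup>2)"
proof -
  define d where "d x = q x * (1 - q x) + a\<^sup>2 * (pmf p x)\<^sup>2" for x
  have "measure_pmf.expectation Q (\<lambda>b. v b * v b) =
     measure_pmf.expectation Q (\<lambda>b. \<Sum>x\<in>{1..k}. \<Sum>y\<in>{1..k}. mu x * mu y * ((ind (b x) - q x) * (ind (b y) - q y)))"
    unfolding v_def by (simp add: sum_product mult_ac)
  also have "\<dots> = (\<Sum>x\<in>{1..k}. \<Sum>y\<in>{1..k}. mu x * mu y * c x y)"
    by (simp add: c_def)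
  also have "\<dots> = (\<Sum>x\<in>{1..k}. \<Sum>y\<in>{1..k}. mu x * mu y * ((if x = y then d x else 0) - a\<^sup>2 * pmf p x * pmf p y))"
    by (intro sum.cong refl) (simp add: c_formula d_def)
  also have "\<dots> = (\<Sum>x\<in>{1..k}. (mu x)\<^sup>2 * d x) - a\<^sup>2 * (\<Sum>x\<in>{1..k}. mu x * pmf p x)\<^sup>2"
  proof -
    have 1: "mu x * mu y * ((if x = y then d x else 0) - a\<^sup>2 * pmf p x * pmf p y) =
        (if x = y then mu x * mu y * d x else 0) - a\<^sup>2 * ((mu x * pmf p x) * (mu y * pmf p y))" for x y
      by (simp add: algebra_simps)
    have 2: "(\<Sum>y\<in>{1..k}. (if x = y then mu x * mu y * d x else 0)) = (mu x)\<^sup>2 * d x" if "x \<in> {1..k}" for x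
      using that by (simp add: power2_eq_square)
    have "(\<Sum>x\<in>{1..k}. \<Sum>y\<in>{1..k}. mu x * mu y * ((if x = y then d x else 0) - a\<^sup>2 * pmf p x * pmf p y))
       = (\<Sum>x\<in>{1..k}. (\<Sum>y\<in>{1..k}. (if x = y then mu x * mu y * d x else 0)) - a\<^sup>2 * (\<Sum>y\<in>{1..k}. (mu x * pmf p x) * (mu y * pmf p y)))"
      by (simp only: 1 sum_subtractf sum_distrib_left)
    also have "\<dots> = (\<Sum>x\<in>{1..k}. (mu x)\<^sup>2 * d x - a\<^sup>2 * (\<Sum>y\<in>{1..k}. (mu x * pmf p x) * (mu y * pmf p y)))"
      by (intro sum.cong refl) (simp only: 2)
    also have "\<dots> = (\<Sum>x\<in>{1..k}. (mu x)\<^sup>2 * d x) - a\<^sup>2 * (\<Sum>x\<in>{1..k}. \<Sum>y\<in>{1..k}. (mu x * pmf p x) * (mu y * pmf p y))"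
      by (simp only: sum_subtractf sum_distrib_left)
    also have "\<dots> = (\<Sum>x\<in>{1..k}. (mu x)\<^sup>2 * d x) - a\<^sup>2 * (\<Sum>x\<in>{1..k}. mu x * pmf p x)\<^sup>2"
      by (simp only: power2_eq_square[of "sum _ _"] sum_product)
    finally show ?thesis .
  qed
  also have "\<dots> \<le> (\<Sum>x\<in>{1..k}. (mu x)\<^sup>2 * d x)" by simp
  also have "\<dots> \<le> (\<Sum>x\<in>{1..k}. (mu x)\<^sup>2 * (5/4))"
  proof (intro sum_mono mult_left_mono)
    fix x assume x: "x \<in> {1..k}"
    have h1: "0 \<le> (q x - 1/2)\<^sup>2" by simp
    have h2: "(q x - 1/2)\<^sup>2 = 1/4 - q x * (1 - q x)" by (simp add: power2_eq_square algebra_simps)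
    have "q x * (1 - q x) \<le> 1/4" using h1 h2 by linarith
    moreover have "a\<^sup>2 * (pmf p x)\<^sup>2 \<le> 1"
      using a_pos alpha_le1[of e] pmf_le_1[of p x] by (simp add: power_le_one mult_le_one abs_le_iff)
    ultimately show "d x \<le> 5/4" by (simp add: d_def)
  qed simp
  also have "\<dots> = (\<Sum>x\<in>{1..k}. (mu x)\<^sup>2) * (5/4)" by (rule sum_distrib_right[symmetric])
  finally show ?thesis by linarith
qed

end


lemma offdiag:
  fixes f :: "nat \<Rightarrow> real"
  shows "(\<Sum>i<n. \<Sum>j\<in>{..<n}-{i}. f i * f j) = (\<Sum>i<n. f i)\<^sup>2 - (\<Sum>i<n. f i * f i)"
proof -
  have "(\<Sum>i<n. \<Sum>j\<in>{..<n}-{i}. f i * f j) = (\<Sum>i<n. f i * ((\<Sum>j<n. f j) - f i))"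
    by (intro sum.cong refl) (simp add: sum_distrib_left[symmetric] sum_diff1)
  also have "\<dots> = (\<Sum>i<n. f i)\<^sup>2 - (\<Sum>i<n. f i * f i)"
    by (simp add: right_diff_distrib sum_subtractf power2_eq_square sum_distrib_right)
  finally show ?thesis .
qed

lemma count_N_sum: "count_N n B x = (\<Sum>i<n. ind (B i x))"
proof -
  have "(\<Sum>i<n. ind (B i x)) = (\<Sum>i\<in>{j \<in> {..<n}. B j x}. 1)"
    by (simp add: ind_def sum.If_cases Int_def)
  thus ?thesis by (simp add: count_N_def)
qed

locale rapn = rap +
  fixes n :: nat
begin

definition M :: "(nat \<Rightarrow> nat \<Rightarrow> bool) pmf" where "M = Pi_pmf {..<n} (\<lambda>_. False) (\<lambda>_. Q)"

lemma fin_M[simp]: "finite (set_pmf M)"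
  unfolding M_def by (rule finite_set_Pi_pmf) auto

lemma int_M[simp]: "integrable (measure_pmf M) (f :: _ \<Rightarrow> real)"
  by (rule integrable_measure_pmf_finite) simp

definition W :: "(nat \<Rightarrow> bool) \<Rightarrow> nat \<Rightarrow> real" where "W b x = ind (b x) - q x"

lemma E_W: "measure_pmf.expectation Q (\<lambda>b. W b x) = 0"
  unfolding W_def by (rule E_W0)

lemma E4:
  assumes "i < n" "j < n" "i \<noteq> j" "i' < n" "j' < n" "i' \<noteq> j'"
  shows "measure_pmf.expectation M (\<lambda>B. W (B i) x * W (B j) x * (W (B i') y * W (B j') y)) =
         (if (i' = i \<and> j' = j) \<or> (i' = j \<and> j' = i) then (c x y)\<^sup>2 else 0)"
proof (cases "i \<noteq> i' \<and> i \<noteq> j'")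
  case True
  have "measure_pmf.expectation M (\<lambda>B. W (B i) x * (W (B j) x * (W (B i') y * W (B j') y))) = 0"
    unfolding M_def
    by (rule E_Pi_zero[where f="\<lambda>b. W b x" and G="\<lambda>B. W (B j) x * (W (B i') y * W (B j') y)"])
       (use assms True E_W in auto)
  thus ?thesis using True by (simp add: mult.assoc)
next
  case F1: False
  show ?thesis
  proof (cases "j \<noteq> i' \<and> j \<noteq> j'")
    case True
    have "measure_pmf.expectation M (\<lambda>B. W (B j) x * (W (B i) x * (W (B i') y * W (B j') y))) = 0"
      unfolding M_def
      by (rule E_Pi_zero[where f="\<lambda>b. W b x" and G="\<lambda>B. W (B i) x * (W (B i') y * W (B j') y)"])
         (use assms True E_W in auto)
    thus ?thesis using True by (simp add: mult_ac)
  next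
    case False
    with F1 assms have cases: "(i' = i \<and> j' = j) \<or> (i' = j \<and> j' = i)" by auto
    have "measure_pmf.expectation M (\<lambda>B. W (B i) x * W (B j) x * (W (B i') y * W (B j') y)) =
          measure_pmf.expectation M (\<lambda>B. \<Prod>l\<in>{i,j}. W (B l) x * W (B l) y)"
      using cases assms by (intro Bochner_Integration.integral_cong refl) (auto simp: mult_ac)
    also have "\<dots> = (\<Prod>l\<in>{i,j}. measure_pmf.expectation Q (\<lambda>b. W b x * W b y))"
      unfolding M_def by (rule E_Pi_prod_subset[where f="\<lambda>_ b. W b x * W b y"]) (use assms in auto)
    also have "\<dots> = (c x y)\<^sup>2"
      using assms by (simp add: c_def W_def power2_eq_square)
    finally show ?thesis using cases by simp
  qed
qed

lemma sum_pairs: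
  assumes "i < n" "j < n" "i \<noteq> j"
  shows "(\<Sum>i'<n. \<Sum>j'\<in>{..<n}-{i'}. (if (i' = i \<and> j' = j) \<or> (i' = j \<and> j' = i) then C else 0)) = 2 * (C::real)"
proof -
  have "(\<Sum>i'<n. \<Sum>j'\<in>{..<n}-{i'}. (if (i' = i \<and> j' = j) \<or> (i' = j \<and> j' = i) then C else 0)) =
        (\<Sum>i'<n. (if i' = i then C else 0) + (if i' = j then C else 0))"
  proof (intro sum.cong refl)
    fix i' assume i': "i' \<in> {..<n}"
    have "(if (i' = i \<and> j' = j) \<or> (i' = j \<and> j' = i) then C else 0) =
          (if i' = i then (if j' = j then C else 0) else 0) + (if i' = j then (if j' = i then C else 0) else 0)" for j'
      using assms by auto
    hence "(\<Sum>j'\<in>{..<n}-{i'}. (if (i' = i \<and> j' = j) \<or> (i' = j \<and> j' = i) then C else 0)) =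
       (\<Sum>j'\<in>{..<n}-{i'}. (if i' = i then (if j' = j then C else 0) else 0)) +
       (\<Sum>j'\<in>{..<n}-{i'}. (if i' = j then (if j' = i then C else 0) else 0))"
      by (simp add: sum.distrib)
    also have "\<dots> = (if i' = i then C else 0) + (if i' = j then C else 0)"
      using assms by (cases "i' = i"; cases "i' = j") auto
    finally show "(\<Sum>j'\<in>{..<n}-{i'}. (if (i' = i \<and> j' = j) \<or> (i' = j \<and> j' = i) then C else 0)) =
       (if i' = i then C else 0) + (if i' = j then C else 0)" .
  qed
  also have "\<dots> = 2 * C" using assms by (simp add: sum.distrib)
  finally show ?thesis .
qed

definition U :: "(nat \<Rightarrow> nat \<Rightarrow> bool) \<Rightarrow> real" where
  "U B = (\<Sum>x\<in>{1..k}. \<Sum>i<n. \<Sum>j\<in>{..<n}-{i}. W (B i) x * W (B j) x)"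

lemma E_U2: "measure_pmf.expectation M (\<lambda>B. U B * U B) \<le> 4 * real n * real n * real k"
proof -
  have exp: "U B * U B = (\<Sum>x\<in>{1..k}. \<Sum>i<n. \<Sum>j\<in>{..<n}-{i}. \<Sum>y\<in>{1..k}. \<Sum>i'<n. \<Sum>j'\<in>{..<n}-{i'}.
       W (B i) x * W (B j) x * (W (B i') y * W (B j') y))" for B
  proof -
    have "U B * U B = (\<Sum>x\<in>{1..k}. \<Sum>i<n. \<Sum>j\<in>{..<n}-{i}. W (B i) x * W (B j) x * U B)"
      by (simp only: U_def[of B] sum_distrib_right)
    also have "\<dots> = (\<Sum>x\<in>{1..k}. \<Sum>i<n. \<Sum>j\<in>{..<n}-{i}. \<Sum>y\<in>{1..k}. \<Sum>i'<n. \<Sum>j'\<in>{..<n}-{i'}.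
       W (B i) x * W (B j) x * (W (B i') y * W (B j') y))"
      by (simp only: U_def[of B] sum_distrib_left)
    finally show ?thesis .
  qed
  have "measure_pmf.expectation M (\<lambda>B. U B * U B) =
      (\<Sum>x\<in>{1..k}. \<Sum>i<n. \<Sum>j\<in>{..<n}-{i}. \<Sum>y\<in>{1..k}. \<Sum>i'<n. \<Sum>j'\<in>{..<n}-{i'}.
       measure_pmf.expectation M (\<lambda>B. W (B i) x * W (B j) x * (W (B i') y * W (B j') y)))"
    by (simp only: exp Bochner_Integration.integral_sum int_M)
  also have "\<dots> = (\<Sum>x\<in>{1..k}. \<Sum>i<n. \<Sum>j\<in>{..<n}-{i}. \<Sum>y\<in>{1..k}. 2 * (c x y)\<^sup>2)"
  proof (intro sum.cong refl)
    fix x i j y assume "i \<in> {..<n}" "j \<in> {..<n} - {i}"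
    then have ij: "i < n" "j < n" "i \<noteq> j" by auto
    have "(\<Sum>i'<n. \<Sum>j'\<in>{..<n}-{i'}. measure_pmf.expectation M (\<lambda>B. W (B i) x * W (B j) x * (W (B i') y * W (B j') y)))
       = (\<Sum>i'<n. \<Sum>j'\<in>{..<n}-{i'}. (if (i' = i \<and> j' = j) \<or> (i' = j \<and> j' = i) then (c x y)\<^sup>2 else 0))"
      by (intro sum.cong refl E4) (use ij in auto)
    also have "\<dots> = 2 * (c x y)\<^sup>2" by (rule sum_pairs[OF ij])
    finally show "(\<Sum>i'<n. \<Sum>j'\<in>{..<n}-{i'}. measure_pmf.expectation M (\<lambda>B. W (B i) x * W (B j) x * (W (B i') y * W (B j') y)))
       = 2 * (c x y)\<^sup>2" .
  qed
  also have "\<dots> = (\<Sum>x\<in>{1..k}. \<Sum>i<n. real (n - 1) * (\<Sum>y\<in>{1..k}. 2 * (c x y)\<^sup>2))"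
    by (intro sum.cong refl) (simp add: card_Diff_singleton)
  also have "\<dots> = 2 * real n * real (n - 1) * (\<Sum>x\<in>{1..k}. \<Sum>y\<in>{1..k}. (c x y)\<^sup>2)"
    by (cases n) (simp_all add: sum_distrib_left algebra_simps)
  also have "\<dots> \<le> 2 * real n * real (n - 1) * (2 * real k)"
    by (intro mult_left_mono sum_c_sq) auto
  also have "\<dots> \<le> 4 * real n * real n * real k"
  proof -
    have "real (n - 1) \<le> real n" by simp
    hence "2 * real n * real (n - 1) * (2 * real k) \<le> 2 * real n * real n * (2 * real k)"
      by (intro mult_right_mono mult_left_mono) auto
    thus ?thesis by simp
  qed
  finally show ?thesis .
qed

definition L :: "(nat \<Rightarrow> nat \<Rightarrow> bool) \<Rightarrow> real" where
  "L B = 2 * (real n - 1) * (\<Sum>i<n. v (B i))"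

lemma E_vv: "i < n \<Longrightarrow> i' < n \<Longrightarrow> measure_pmf.expectation M (\<lambda>B. v (B i) * v (B i')) =
   (if i = i' then measure_pmf.expectation Q (\<lambda>b. v b * v b) else 0)"
proof (cases "i = i'")
  case True
  assume "i < n"
  have "measure_pmf.expectation M (\<lambda>B. \<Prod>l\<in>{i}. v (B l) * v (B l)) =
        (\<Prod>l\<in>{i}. measure_pmf.expectation Q (\<lambda>b. v b * v b))"
    unfolding M_def by (rule E_Pi_prod_subset[where f="\<lambda>_ b. v b * v b"]) (use \<open>i < n\<close> in auto)
  thus ?thesis using True by simp
next
  case False
  assume "i < n" "i' < n"
  have "measure_pmf.expectation M (\<lambda>B. v (B i) * v (B i')) = 0"
    unfolding M_def
    by (rule E_Pi_zero[where f=v and G="\<lambda>B. v (B i')"]) (use False \<open>i < n\<close> E_v0 in auto)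
  thus ?thesis using False by simp
qed

lemma E_L2: "measure_pmf.expectation M (\<lambda>B. L B * L B) \<le> 5 * real n ^ 3 * (\<Sum>x\<in>{1..k}. (mu x)\<^sup>2)"
proof -
  have "measure_pmf.expectation M (\<lambda>B. L B * L B) =
     measure_pmf.expectation M (\<lambda>B. (4 * (real n - 1)\<^sup>2) * (\<Sum>i<n. \<Sum>i'<n. v (B i) * v (B i')))"
  proof -
    have "L B * L B = 4 * (real n - 1)\<^sup>2 * (\<Sum>i<n. \<Sum>i'<n. v (B i) * v (B i'))" for B
    proof -
      have "L B * L B = (4 * (real n - 1)\<^sup>2) * ((\<Sum>i<n. v (B i)) * (\<Sum>i<n. v (B i)))"
        by (simp add: L_def power2_eq_square algebra_simps)
      thus ?thesis by (simp only: sum_product)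
    qed
    thus ?thesis by simp
  qed
  also have "\<dots> = 4 * (real n - 1)\<^sup>2 * (\<Sum>i<n. \<Sum>i'<n. measure_pmf.expectation M (\<lambda>B. v (B i) * v (B i')))"
    by (simp only: integral_mult_right_zero Bochner_Integration.integral_sum int_M)
  also have "\<dots> = 4 * (real n - 1)\<^sup>2 * (\<Sum>i<n. measure_pmf.expectation Q (\<lambda>b. v b * v b))"
    by (simp add: E_vv)
  also have "\<dots> = 4 * (real n - 1)\<^sup>2 * real n * measure_pmf.expectation Q (\<lambda>b. v b * v b)"
    by simp
  also have "\<dots> \<le> 4 * (real n - 1)\<^sup>2 * real n * (5/4 * (\<Sum>x\<in>{1..k}. (mu x)\<^sup>2))"
    by (intro mult_left_mono E_v2) auto
  also have "\<dots> \<le> 5 * real n ^ 3 * (\<Sum>x\<in>{1..k}. (mu x)\<^sup>2)"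
  proof -
    have s: "0 \<le> (\<Sum>x\<in>{1..k}. (mu x)\<^sup>2)" by (simp add: sum_nonneg)
    have "(real n - 1)\<^sup>2 * real n \<le> real n ^ 3"
    proof (cases n)
      case (Suc m)
      hence "(real n - 1)\<^sup>2 \<le> (real n)\<^sup>2" by (auto simp: power_mono)
      thus ?thesis by (simp add: power3_eq_cube power2_eq_square mult_right_mono)
    qed simp
    from mult_right_mono[OF this s] show ?thesis by (simp add: mult_ac)
  qed
  finally show ?thesis .
qed

end


lemma cheb:
  fixes X :: "'b \<Rightarrow> real"
  assumes fin: "finite (set_pmf P)" and t: "0 < t"
  shows "measure_pmf.prob P {z. t \<le> \<bar>X z\<bar>} \<le> measure_pmf.expectation P (\<lambda>z. X z * X z) / t\<^sup>2"
proof -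
  let ?S = "{z. t \<le> \<bar>X z\<bar>}"
  have int: "integrable (measure_pmf P) h" for h :: "_ \<Rightarrow> real" by (rule integrable_measure_pmf_finite[OF fin])
  have "t\<^sup>2 * measure_pmf.prob P ?S = measure_pmf.expectation P (\<lambda>z. t\<^sup>2 * indicator ?S z)"
    by simp
  also have "\<dots> \<le> measure_pmf.expectation P (\<lambda>z. X z * X z)"
  proof (rule integral_mono[OF int int])
    fix z
    show "t\<^sup>2 * indicator ?S z \<le> X z * X z"
    proof (cases "z \<in> ?S")
      case True
      hence "t\<^sup>2 \<le> \<bar>X z\<bar>\<^sup>2" using t by (intro power_mono) auto
      thus ?thesis using True by (simp add: power2_eq_square)
    qed simp
  qed
  finally show ?thesis using t by (simp add: field_simps)
qed

lemma alg_identity: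
  fixes N nn q l s s2 :: real
  assumes "s = N - nn * q" "s2 = N - 2 * q * N + nn * q\<^sup>2"
  shows "(N - (nn - 1) * l)\<^sup>2 - N + (nn - 1) * l\<^sup>2 = (s\<^sup>2 - s2) + 2 * (nn - 1) * (q - l) * s + nn * (nn - 1) * (q - l)\<^sup>2"
  unfolding assms by (simp add: power2_eq_square algebra_simps)

context rapn begin

lemma per_x:
  "(count_N n B x - (real n - 1) * (a / real k + bt))\<^sup>2 - count_N n B x + (real n - 1) * (a / real k + bt)\<^sup>2
   = (\<Sum>i<n. \<Sum>j\<in>{..<n}-{i}. W (B i) x * W (B j) x) + 2 * (real n - 1) * mu x * (\<Sum>i<n. W (B i) x)
     + real n * (real n - 1) * (mu x)\<^sup>2"
proof -
  define N where "N = count_N n B x"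
  have s: "(\<Sum>i<n. W (B i) x) = N - real n * q x"
    by (simp add: N_def W_def count_N_sum sum_subtractf)
  have s2: "(\<Sum>i<n. W (B i) x * W (B i) x) = N - 2 * q x * N + real n * (q x)\<^sup>2"
  proof -
    have "(\<Sum>i<n. W (B i) x * W (B i) x) = (\<Sum>i<n. ind (B i x) - 2 * q x * ind (B i x) + (q x)\<^sup>2)"
      by (intro sum.cong refl) (simp add: W_def power2_eq_square algebra_simps)
    also have "\<dots> = N - 2 * q x * N + real n * (q x)\<^sup>2"
      by (simp add: N_def count_N_sum sum.distrib sum_subtractf sum_distrib_left)
    finally show ?thesis .
  qed
  show ?thesis
    unfolding N_def[symmetric] offdiag mu_def by (rule alg_identity[OF s s2])
qed

lemma stat_identity:
  "rappor_stat e k n B = U B + L B + real n * (real n - 1) * (\<Sum>x\<in>{1..k}. (mu x)\<^sup>2)"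
proof -
  define lam where "lam = a / real k + bt"
  have "rappor_stat e k n B = (\<Sum>x\<in>{1..k}. (count_N n B x - (real n - 1) * lam)\<^sup>2 - count_N n B x
       + (real n - 1) * lam\<^sup>2)"
    by (simp add: rappor_stat_def lam_def Let_def sum.distrib mult_ac)
  also have "\<dots> = (\<Sum>x\<in>{1..k}. (\<Sum>i<n. \<Sum>j\<in>{..<n}-{i}. W (B i) x * W (B j) x) + 2 * (real n - 1) * mu x * (\<Sum>i<n. W (B i) x)
     + real n * (real n - 1) * (mu x)\<^sup>2)"
    unfolding lam_def by (intro sum.cong refl per_x)
  also have "\<dots> = U B + 2 * (real n - 1) * (\<Sum>x\<in>{1..k}. mu x * (\<Sum>i<n. W (B i) x))
      + real n * (real n - 1) * (\<Sum>x\<in>{1..k}. (mu x)\<^sup>2)"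
    by (simp add: U_def sum.distrib sum_distrib_left mult_ac)
  also have "(\<Sum>x\<in>{1..k}. mu x * (\<Sum>i<n. W (B i) x)) = (\<Sum>i<n. v (B i))"
    by (simp add: v_def W_def sum_distrib_left) (rule sum.swap)
  finally show ?thesis by (simp add: L_def)
qed

lemma E_dev: "measure_pmf.expectation M (\<lambda>B. (rappor_stat e k n B - real n * (real n - 1) * (\<Sum>x\<in>{1..k}. (mu x)\<^sup>2)) *
     (rappor_stat e k n B - real n * (real n - 1) * (\<Sum>x\<in>{1..k}. (mu x)\<^sup>2)))
   \<le> 8 * real n * real n * real k + 10 * real n ^ 3 * (\<Sum>x\<in>{1..k}. (mu x)\<^sup>2)"
proof -
  have "measure_pmf.expectation M (\<lambda>B. (rappor_stat e k n B - real n * (real n - 1) * (\<Sum>x\<in>{1..k}. (mu x)\<^sup>2)) *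
     (rappor_stat e k n B - real n * (real n - 1) * (\<Sum>x\<in>{1..k}. (mu x)\<^sup>2)))
     = measure_pmf.expectation M (\<lambda>B. (U B + L B) * (U B + L B))"
    by (simp add: stat_identity)
  also have "\<dots> \<le> measure_pmf.expectation M (\<lambda>B. 2 * (U B * U B) + 2 * (L B * L B))"
  proof (rule integral_mono)
    fix B
    have "0 \<le> (U B - L B) * (U B - L B)" by simp
    thus "(U B + L B) * (U B + L B) \<le> 2 * (U B * U B) + 2 * (L B * L B)" by (simp add: algebra_simps)
  qed simp_all
  also have "\<dots> = 2 * measure_pmf.expectation M (\<lambda>B. U B * U B) + 2 * measure_pmf.expectation M (\<lambda>B. L B * L B)"
    by simp
  also have "\<dots> \<le> 8 * real n * real n * real k + 10 * real n ^ 3 * (\<Sum>x\<in>{1..k}. (mu x)\<^sup>2)"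
    using E_U2 E_L2 by simp
  finally show ?thesis .
qed

end


lemma arith_null:
  fixes kk nn X E :: real
  assumes kk: "1 \<le> kk" and nn: "2 \<le> nn" and X: "54 * (kk * sqrt kk) \<le> X" and E: "E \<le> 8 * nn * nn * kk"
  shows "E / (nn * X / kk)\<^sup>2 \<le> 1/3"
proof -
  have sk: "sqrt kk * sqrt kk = kk" using kk by simp
  have X0: "0 \<le> 54 * (kk * sqrt kk)" using kk by simp
  have "(54 * (kk * sqrt kk))\<^sup>2 \<le> X\<^sup>2" by (rule power_mono[OF X X0])
  moreover have "(54 * (kk * sqrt kk))\<^sup>2 = 2916 * (kk * kk * (sqrt kk * sqrt kk))"
    by (simp only: power2_eq_square mult_ac)
  moreover have "2916 * (kk * kk * (sqrt kk * sqrt kk)) = 2916 * (kk * kk * kk)" by (simp only: sk)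
  ultimately have X2: "2916 * (kk * kk * kk) \<le> X\<^sup>2" by (simp only:)
  have "0 < 54 * (kk * sqrt kk)" using kk by simp
  hence Xpos: "0 < X" using X by linarith
  have dpos: "0 < (nn * X / kk)\<^sup>2" using Xpos kk nn by simp
  have "0 \<le> kk * kk * kk" using kk by simp
  hence "24 * (kk * kk * kk) \<le> X\<^sup>2" using X2 by linarith
  hence "(nn * nn) * (24 * (kk * kk * kk)) \<le> (nn * nn) * X\<^sup>2" by (intro mult_left_mono) auto
  hence "8 * nn * nn * kk * 3 \<le> (nn * X / kk)\<^sup>2"
    using kk by (simp add: power_divide power_mult_distrib field_simps power2_eq_square)
  hence "E * 3 \<le> (nn * X / kk)\<^sup>2" using E by linarith
  thus ?thesis using dpos by (simp add: pos_divide_le_eq)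
qed

lemma arith_alt:
  fixes kk nn Y S E :: real
  assumes kk: "1 \<le> kk" and nn: "2 \<le> nn" and Y: "216 * sqrt kk \<le> Y" and S: "0 \<le> S" and YS: "Y = (nn - 1) * S"
    and E: "E \<le> 8 * nn * nn * kk + 10 * nn ^ 3 * S"
  shows "E / (3/4 * (nn * Y))\<^sup>2 \<le> 1/3"
proof -
  have sk: "1 \<le> sqrt kk" using kk by simp
  have Y216: "216 \<le> Y" using Y sk by linarith
  have Y2: "216 * 216 * kk \<le> Y * Y"
  proof -
    have "(216 * sqrt kk) * (216 * sqrt kk) \<le> Y * Y" using Y sk Y216 by (intro mult_mono) auto
    moreover have "(216 * sqrt kk) * (216 * sqrt kk) = 216 * 216 * (sqrt kk * sqrt kk)" by (simp only: mult_ac)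
    moreover have "sqrt kk * sqrt kk = kk" using kk by simp
    ultimately show ?thesis by simp
  qed
  have "nn \<le> 2 * (nn - 1)" using nn by (simp add: algebra_simps)
  hence "nn * S \<le> 2 * (nn - 1) * S" using S by (intro mult_right_mono) auto
  hence nS: "nn * S \<le> 2 * Y" using YS by (simp add: mult_ac)
  have e3: "10 * nn ^ 3 * S = 10 * (nn * nn) * (nn * S)" by (simp add: power3_eq_cube mult_ac)
  have "10 * (nn * nn) * (nn * S) \<le> 10 * (nn * nn) * (2 * Y)" using nS by (intro mult_left_mono) auto
  hence "10 * nn ^ 3 * S \<le> 10 * (nn * nn) * (2 * Y)" by (simp only: e3)
  hence E2: "E \<le> nn * nn * (8 * kk + 20 * Y)" using E by (simp add: algebra_simps)
  have "3 * (8 * kk + 20 * Y) \<le> 9/16 * (Y * Y)"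
  proof -
    have "216 * Y \<le> Y * Y" using Y216 by (intro mult_right_mono) auto
    hence "9/32 * (216 * Y) \<le> 9/32 * (Y * Y)" by (intro mult_left_mono) auto
    moreover obtain Z where Z: "Z = Y * Y" by blast
    ultimately have "9/32 * (216 * Y) \<le> 9/32 * Z" "216 * 216 * kk \<le> Z" using Y2 by simp_all
    hence "3 * (8 * kk + 20 * Y) \<le> 9 / 16 * Z" using kk Y216 by argo
    thus ?thesis using Z by simp
  qed
  hence "nn * nn * (3 * (8 * kk + 20 * Y)) \<le> nn * nn * (9/16 * (Y * Y))" by (intro mult_left_mono) auto
  hence "E * 3 \<le> (3/4 * (nn * Y))\<^sup>2" using E2 nn by (simp add: power2_eq_square algebra_simps)
  moreover have "0 < (3/4 * (nn * Y))\<^sup>2" using Y216 nn by simp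
  ultimately show ?thesis by (simp add: pos_divide_le_eq)
qed



lemma kpow: "0 \<le> x \<Longrightarrow> (x::real) powr (3/2) = x * sqrt x"
proof -
  assume x: "0 \<le> x"
  show ?thesis
  proof (cases "x = 0")
    case False
    have e: "(3/2::real) = 1 + 1/2" by simp
    have "x powr (3/2) = x powr (1 + 1/2)" by (subst e) (rule refl)
    also have "\<dots> = x powr 1 * x powr (1/2)" by (rule powr_add)
    also have "\<dots> = x * sqrt x" using x False by (simp add: powr_half_sqrt)
    finally show ?thesis .
  qed simp
qed

context rapn begin

lemma pmf_unif: "2 \<le> k \<Longrightarrow> x \<in> {1..k} \<Longrightarrow> pmf (uniform_k k) x = 1 / real k"
  unfolding uniform_k_def by (subst pmf_of_set) auto

lemma null_case:
  assumes unif: "p = uniform_k k" and k2: "2 \<le> k" and g: "0 < \<gamma>" and n2: "2 \<le> n"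
    and H: "54 * real k powr (3/2) \<le> (real n - 1) * a\<^sup>2 * \<gamma>\<^sup>2"
  shows "measure_pmf.prob M {B. \<not> rappor_test e k n \<gamma> B} \<le> 1/3"
proof -
  define X where "X = (real n - 1) * a\<^sup>2 * \<gamma>\<^sup>2"
  define thr where "thr = real n * X / real k"
  have S0: "(\<Sum>x\<in>{1..k}. (mu x)\<^sup>2) = 0"
  proof (intro sum.neutral ballI)
    fix x assume x: "x \<in> {1..k}"
    have "pmf p x = 1 / real k" using pmf_unif[OF k2 x] unif by simp
    thus "(mu x)\<^sup>2 = 0" using mu_eq[OF x] by simp
  qed
  have Xpos: "0 < X" unfolding X_def using n2 g a_pos by auto
  have thrpos: "0 < thr" unfolding thr_def using Xpos n2 k2 by auto
  have sub: "{B. \<not> rappor_test e k n \<gamma> B} \<subseteq>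
     {B. thr \<le> \<bar>rappor_stat e k n B - real n * (real n - 1) * (\<Sum>x\<in>{1..k}. (mu x)\<^sup>2)\<bar>}"
  proof
    fix B assume "B \<in> {B. \<not> rappor_test e k n \<gamma> B}"
    hence t: "thr \<le> rappor_stat e k n B" by (simp add: rappor_test_def thr_def X_def mult_ac)
    have e: "rappor_stat e k n B - real n * (real n - 1) * (\<Sum>x\<in>{1..k}. (mu x)\<^sup>2) = rappor_stat e k n B"
      by (simp only: S0 mult_zero_right diff_zero)
    show "B \<in> {B. thr \<le> \<bar>rappor_stat e k n B - real n * (real n - 1) * (\<Sum>x\<in>{1..k}. (mu x)\<^sup>2)\<bar>}"
      unfolding mem_Collect_eq e using t abs_ge_self[of "rappor_stat e k n B"] by linarith
  qed
  have "measure_pmf.prob M {B. \<not> rappor_test e k n \<gamma> B} \<le>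
     measure_pmf.prob M {B. thr \<le> \<bar>rappor_stat e k n B - real n * (real n - 1) * (\<Sum>x\<in>{1..k}. (mu x)\<^sup>2)\<bar>}"
    by (rule measure_pmf.finite_measure_mono[OF sub]) simp
  also have "\<dots> \<le> measure_pmf.expectation M (\<lambda>B. (rappor_stat e k n B - real n * (real n - 1) * (\<Sum>x\<in>{1..k}. (mu x)\<^sup>2)) *
     (rappor_stat e k n B - real n * (real n - 1) * (\<Sum>x\<in>{1..k}. (mu x)\<^sup>2))) / thr\<^sup>2"
    by (rule cheb[OF fin_M thrpos])
  also have "\<dots> \<le> 1/3"
    unfolding thr_def
  proof (rule arith_null)
    show "1 \<le> real k" "2 \<le> real n" using k2 n2 by auto
    show "54 * (real k * sqrt (real k)) \<le> X" using H by (simp add: X_def kpow)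
    show "measure_pmf.expectation M (\<lambda>B. (rappor_stat e k n B - real n * (real n - 1) * (\<Sum>x\<in>{1..k}. (mu x)\<^sup>2)) *
     (rappor_stat e k n B - real n * (real n - 1) * (\<Sum>x\<in>{1..k}. (mu x)\<^sup>2))) \<le> 8 * real n * real n * real k"
      using E_dev unfolding S0 by simp
  qed
  finally show ?thesis .
qed

lemma alt_case:
  assumes dtv: "dTV k p (uniform_k k) > \<gamma>" and k2: "2 \<le> k" and g: "0 < \<gamma>" and n2: "2 \<le> n"
    and H: "54 * real k powr (3/2) \<le> (real n - 1) * a\<^sup>2 * \<gamma>\<^sup>2"
  shows "measure_pmf.prob M {B. rappor_test e k n \<gamma> B} \<le> 1/3"
proof -
  define X where "X = (real n - 1) * a\<^sup>2 * \<gamma>\<^sup>2"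
  define thr where "thr = real n * X / real k"
  define D where "D = (\<Sum>x\<in>{1..k}. (pmf p x - 1 / real k)\<^sup>2)"
  define S where "S = (\<Sum>x\<in>{1..k}. (mu x)\<^sup>2)"
  define Y where "Y = (real n - 1) * S"
  have kpos: "0 < real k" using k2 by simp
  have SD: "S = a\<^sup>2 * D"
    unfolding S_def D_def by (simp add: sum_distrib_left mu_eq power_mult_distrib)
  have D: "4 * \<gamma>\<^sup>2 / real k \<le> D"
  proof -
    have abs_sum: "(\<Sum>x\<in>{1..k}. \<bar>pmf p x - 1 / real k\<bar>) = 2 * dTV k p (uniform_k k)"
      unfolding dTV_def using k2 by (simp add: pmf_unif)
    have "2 * \<gamma> \<le> (\<Sum>x\<in>{1..k}. \<bar>pmf p x - 1 / real k\<bar>)" using abs_sum dtv by linarith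
    hence "(2 * \<gamma>)\<^sup>2 \<le> (\<Sum>x\<in>{1..k}. \<bar>pmf p x - 1 / real k\<bar>)\<^sup>2"
      using g by (intro power_mono) auto
    also have "\<dots> \<le> (\<Sum>x\<in>{1..k}. \<bar>pmf p x - 1 / real k\<bar>\<^sup>2) * card {1..k}"
      by (rule sum_squared_le_sum_of_squares)
    also have "\<dots> = D * real k" by (simp add: D_def)
    finally have "4 * \<gamma>\<^sup>2 \<le> D * real k" by (simp add: power_mult_distrib)
    thus ?thesis using kpos by (simp add: divide_le_eq)
  qed
  have Xge: "54 * (real k * sqrt (real k)) \<le> X" using H by (simp add: X_def kpow)
  have Y: "216 * sqrt (real k) \<le> Y"
  proof -
    have "Y = (real n - 1) * a\<^sup>2 * D" by (simp add: Y_def SD mult_ac)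
    also have "(real n - 1) * a\<^sup>2 * D \<ge> (real n - 1) * a\<^sup>2 * (4 * \<gamma>\<^sup>2 / real k)"
      using D n2 by (intro mult_left_mono) auto
    finally have "4 * X / real k \<le> Y" by (simp add: X_def mult_ac)
    moreover have "216 * sqrt (real k) \<le> 4 * X / real k"
    proof -
      have "216 * sqrt (real k) * real k \<le> 4 * X" using Xge by (simp add: mult_ac)
      thus ?thesis using kpos by (simp add: le_divide_eq)
    qed
    ultimately show ?thesis by linarith
  qed
  have Spos: "0 \<le> S" unfolding S_def by (simp add: sum_nonneg)
  have "1 \<le> sqrt (real k)" using k2 by simp
  hence Ypos: "0 < Y" using Y by linarith
  define m where "m = real n * (real n - 1) * S"
  have mY: "m = real n * Y" by (simp add: m_def Y_def mult_ac)
  have mpos: "0 < m" using mY Ypos n2 by simp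
  have thr4: "4 * thr \<le> m"
  proof -
    have "4 * thr = real n * (real n - 1) * a\<^sup>2 * (4 * \<gamma>\<^sup>2 / real k)" by (simp add: thr_def X_def mult_ac)
    also have "\<dots> \<le> real n * (real n - 1) * a\<^sup>2 * D" using D n2 by (intro mult_left_mono) auto
    also have "\<dots> = m" by (simp add: m_def SD mult_ac)
    finally show ?thesis .
  qed
  have sub: "{B. rappor_test e k n \<gamma> B} \<subseteq> {B. 3/4 * m \<le> \<bar>rappor_stat e k n B - m\<bar>}"
  proof
    fix B assume "B \<in> {B. rappor_test e k n \<gamma> B}"
    hence "rappor_stat e k n B < thr" by (simp add: rappor_test_def thr_def X_def mult_ac)
    moreover have "m - rappor_stat e k n B \<le> \<bar>rappor_stat e k n B - m\<bar>" by linarith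
    ultimately show "B \<in> {B. 3/4 * m \<le> \<bar>rappor_stat e k n B - m\<bar>}" using thr4 by simp
  qed
  have "measure_pmf.prob M {B. rappor_test e k n \<gamma> B} \<le> measure_pmf.prob M {B. 3/4 * m \<le> \<bar>rappor_stat e k n B - m\<bar>}"
    by (rule measure_pmf.finite_measure_mono[OF sub]) simp
  also have "\<dots> \<le> measure_pmf.expectation M (\<lambda>B. (rappor_stat e k n B - m) * (rappor_stat e k n B - m)) / (3/4 * m)\<^sup>2"
    by (rule cheb[OF fin_M]) (use mpos in simp)
  also have "\<dots> \<le> 1/3"
    unfolding mY
  proof (rule arith_alt[where S=S])
    show "1 \<le> real k" "2 \<le> real n" using k2 n2 by auto
    show "216 * sqrt (real k) \<le> Y" "0 \<le> S" "Y = (real n - 1) * S" by (fact Y, fact Spos, simp add: Y_def)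
    show "measure_pmf.expectation M (\<lambda>B. (rappor_stat e k n B - real n * Y) * (rappor_stat e k n B - real n * Y))
       \<le> 8 * real n * real n * real k + 10 * real n ^ 3 * S"
      using E_dev by (simp add: mY[symmetric] m_def S_def)
  qed
  finally show ?thesis .
qed

end


lemma alpha_lower: assumes "0 < e" "e \<le> 1" shows "e / 6 \<le> alpha_R e"
proof -
  define E where "E = exp (e/2)"
  have E1: "1 + e/2 \<le> E" unfolding E_def by (rule exp_ge_add_one_self)
  have "E \<le> exp (1/2)" unfolding E_def using assms by simp
  hence E2: "E \<le> 2" using exp_half_le2 by linarith
  have "(E - 1) / 3 \<le> (E - 1) / (E + 1)"
    using E1 E2 assms by (intro divide_left_mono) auto
  moreover have "e / 6 \<le> (E - 1) / 3" using E1 by simp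
  ultimately show ?thesis unfolding alpha_R_def E_def[symmetric] by linarith
qed

lemma prob_compl_Collect: "measure_pmf.prob P {x. Pr x} = 1 - measure_pmf.prob P {x. \<not> Pr x}"
proof -
  have "measure_pmf.prob P (space (measure_pmf P) - {x. \<not> Pr x}) = 1 - measure_pmf.prob P {x. \<not> Pr x}"
    by (rule measure_pmf.prob_compl) simp
  moreover have "space (measure_pmf P) - {x. \<not> Pr x} = {x. Pr x}" by auto
  ultimately show ?thesis by simp
qed

theorem theorem3p1:
  shows "\<exists>C>0. \<forall>k::nat. \<forall>\<gamma> \<epsilon>::real. \<forall>n::nat.
     k \<ge> 2 \<longrightarrow> 0 < \<gamma> \<longrightarrow> \<gamma> \<le> 1 \<longrightarrow> 0 < \<epsilon> \<longrightarrow> \<epsilon> \<le> 1 \<longrightarrow>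
     real n \<ge> C * real k powr (3/2) / (\<gamma>\<^sup>2 * \<epsilon>\<^sup>2) \<longrightarrow>
     is_uniformity_tester k \<gamma> n (rappor \<epsilon> k) (\<lambda>_. False) (rappor_test \<epsilon> k n \<gamma>)"
proof (intro exI[of _ 4000] conjI allI impI)
  fix k :: nat and \<gamma> \<epsilon> :: real and n :: nat
  assume k2: "2 \<le> k" and g0: "0 < \<gamma>" and g1: "\<gamma> \<le> 1" and e0: "0 < \<epsilon>" and e1: "\<epsilon> \<le> 1"
    and hn: "4000 * real k powr (3/2) / (\<gamma>\<^sup>2 * \<epsilon>\<^sup>2) \<le> real n"
  define K where "K = real k powr (3/2)"
  have K1: "1 \<le> K" unfolding K_def using k2 by (intro ge_one_powr_ge_zero) auto
  have ge0: "0 < \<gamma>\<^sup>2 * \<epsilon>\<^sup>2" using g0 e0 by simp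
  have ge1: "\<gamma>\<^sup>2 * \<epsilon>\<^sup>2 \<le> 1" using g0 g1 e0 e1 by (simp add: power_le_one mult_le_one)
  have n1: "4000 * K \<le> real n * (\<gamma>\<^sup>2 * \<epsilon>\<^sup>2)" using hn ge0 by (simp add: K_def pos_divide_le_eq)
  have "real n * (\<gamma>\<^sup>2 * \<epsilon>\<^sup>2) \<le> real n" using ge1 by (simp add: mult_left_le)
  hence "4000 \<le> real n" using n1 K1 by linarith
  hence n2: "2 \<le> n" by simp
  have "real n \<le> 2 * (real n - 1)" using n2 by simp
  hence "real n * (\<gamma>\<^sup>2 * \<epsilon>\<^sup>2) \<le> 2 * (real n - 1) * (\<gamma>\<^sup>2 * \<epsilon>\<^sup>2)" using ge0 by (intro mult_right_mono) auto
  hence n3: "2000 * K \<le> (real n - 1) * (\<gamma>\<^sup>2 * \<epsilon>\<^sup>2)" using n1 by linarith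
  have a6: "\<epsilon> / 6 \<le> alpha_R \<epsilon>" by (rule alpha_lower[OF e0 e1])
  have "(\<epsilon> / 6)\<^sup>2 \<le> (alpha_R \<epsilon>)\<^sup>2" using a6 e0 by (intro power_mono) auto
  hence "\<epsilon>\<^sup>2 / 36 \<le> (alpha_R \<epsilon>)\<^sup>2" by (simp add: power_divide)
  hence "(real n - 1) * \<gamma>\<^sup>2 * (\<epsilon>\<^sup>2 / 36) \<le> (real n - 1) * \<gamma>\<^sup>2 * (alpha_R \<epsilon>)\<^sup>2"
    using n2 by (intro mult_left_mono) auto
  moreover have "(real n - 1) * \<gamma>\<^sup>2 * (\<epsilon>\<^sup>2 / 36) = (real n - 1) * (\<gamma>\<^sup>2 * \<epsilon>\<^sup>2) / 36" by simp
  ultimately have H: "54 * real k powr (3/2) \<le> (real n - 1) * (alpha_R \<epsilon>)\<^sup>2 * \<gamma>\<^sup>2"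
    using n3 K1 unfolding K_def by (simp add: mult_ac)
  show "is_uniformity_tester k \<gamma> n (rappor \<epsilon> k) (\<lambda>_. False) (rappor_test \<epsilon> k n \<gamma>)"
    unfolding is_uniformity_tester_def Let_def
  proof (intro allI impI conjI)
    fix p :: "nat pmf" assume supp: "set_pmf p \<subseteq> {1..k}"
    interpret rapn k \<epsilon> p n by unfold_locales (use e0 supp in auto)
    have MM: "Pi_pmf {..<n} (\<lambda>_. False) (\<lambda>_. bind_pmf p (rappor \<epsilon> k)) = M" by (simp add: M_def Q_def)
    {
      assume u: "p = uniform_k k"
      have "measure_pmf.prob M {B. \<not> rappor_test \<epsilon> k n \<gamma> B} \<le> 1/3"
        by (rule null_case[OF u k2 g0 n2 H])
      thus "2/3 \<le> measure_pmf.prob (Pi_pmf {..<n} (\<lambda>_. False) (\<lambda>_. bind_pmf p (rappor \<epsilon> k))) {B. rappor_test \<epsilon> k n \<gamma> B}"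
        unfolding MM by (subst prob_compl_Collect) linarith
    }
    {
      assume d: "\<gamma> < dTV k p (uniform_k k)"
      have "measure_pmf.prob M {B. rappor_test \<epsilon> k n \<gamma> B} \<le> 1/3"
        by (rule alt_case[OF d k2 g0 n2 H])
      thus "2/3 \<le> measure_pmf.prob (Pi_pmf {..<n} (\<lambda>_. False) (\<lambda>_. bind_pmf p (rappor \<epsilon> k))) {B. \<not> rappor_test \<epsilon> k n \<gamma> B}"
        unfolding MM using prob_compl_Collect[of M "rappor_test \<epsilon> k n \<gamma>"] by linarith
    }
  qed
qed simp


end
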